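(* Let $G$ be an unweighted digraph without loops with directed deformed graph Laplacian $M(t)$. If $\lambda\notin\{1,-1\}$ is a finite eigenvalue of the directed deformed graph Laplacian $M_i(t)$ of exactly one strongly connected or single node component $G_i$ of $G$ (and of no other component's), then the geometric multiplicity of $\lambda$ as an eigenvalue of $M(t)$ equals its geometric multiplicity as an eigenvalue of $M_i(t)$.
   Context: A digraph $G=(V,E)$, no loops or multiple edges, adjacency matrix $A$; $S=A\circ A^T$, $D=\mathrm{diag}(\mathrm{diag}(A^2))$; $M(t)=I-At+(D-I)t^2+(A-S)t^3$, and similarly $M_i(t)$ for the component $G_i$. Components are the induced subgraphs on the classes of "$i=j$ or mutually reachable by directed walks". The geometric multiplicity of an eigenvalue $\lambda$ is $\dim\ker M(\lambda)$. *)

theory Defs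
  imports "Jordan_Normal_Form.Matrix_Kernel" "Jordan_Normal_Form.DL_Submatrix"
    "Jordan_Normal_Form.Determinant"
begin

text \<open>A digraph on the vertex set {0..<n} is given by its edge relation E
  (E \<subseteq> {0..<n} x {0..<n}, no loops; no multiple edges is automatic for a relation).\<close>

definition digraph_adj :: "nat \<Rightarrow> (nat \<times> nat) set \<Rightarrow> complex mat" where
  "digraph_adj n E = mat n n (\<lambda>(i,j). if (i,j) \<in> E then 1 else 0)"

definition sym_part :: "complex mat \<Rightarrow> complex mat" where
  "sym_part A = mat (dim_row A) (dim_col A) (\<lambda>(i,j). A $$ (i,j) * A $$ (j,i))"

definition deg2_diag :: "complex mat \<Rightarrow> complex mat" where
  "deg2_diag A = mat (dim_row A) (dim_col A) (\<lambda>(i,j). if i = j then (A * A) $$ (i,i) else 0)"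

definition deformed_laplacian :: "complex mat \<Rightarrow> complex \<Rightarrow> complex mat" where
  "deformed_laplacian A t =
     1\<^sub>m (dim_row A) - t \<cdot>\<^sub>m A + (t^2) \<cdot>\<^sub>m (deg2_diag A - 1\<^sub>m (dim_row A))
       + (t^3) \<cdot>\<^sub>m (A - sym_part A)"

definition comp_rel :: "nat \<Rightarrow> (nat \<times> nat) set \<Rightarrow> (nat \<times> nat) set" where
  "comp_rel n E = {(i,j). i < n \<and> j < n \<and> (i = j \<or> ((i,j) \<in> E\<^sup>+ \<and> (j,i) \<in> E\<^sup>+))}"

definition components :: "nat \<Rightarrow> (nat \<times> nat) set \<Rightarrow> nat set set" where
  "components n E = {0..<n} // comp_rel n E"

text \<open>Laplacian of the induced subgraph on the vertex class C (vertices renumbered in increasing order).\<close>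
definition component_laplacian :: "nat \<Rightarrow> (nat \<times> nat) set \<Rightarrow> nat set \<Rightarrow> complex \<Rightarrow> complex mat" where
  "component_laplacian n E C = deformed_laplacian (submatrix (digraph_adj n E) C C)"

definition finite_eigenvalue :: "(complex \<Rightarrow> complex mat) \<Rightarrow> complex \<Rightarrow> bool" where
  "finite_eigenvalue M l \<longleftrightarrow> det (M l) = 0"

definition geom_mult :: "(complex \<Rightarrow> complex mat) \<Rightarrow> complex \<Rightarrow> nat" where
  "geom_mult M l = kernel_dim (M l)"

end

theory Submission imports Defs
begin
lemma kernel_dim_iso:
  fixes M N :: "'a::field mat"
  assumes M: "M \<in> carrier_mat n n" and N: "N \<in> carrier_mat k k"
  and lin_add: "\<And>x y. x \<in> carrier_vec n \<Longrightarrow> y \<in> carrier_vec n \<Longrightarrow> r (x + y) = r x + r y"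
  and lin_smult: "\<And>c x. x \<in> carrier_vec n \<Longrightarrow> r (c \<cdot>\<^sub>v x) = c \<cdot>\<^sub>v r x"
  and inj: "inj_on r (mat_kernel M)"
  and img: "r ` mat_kernel M = mat_kernel N"
  shows "kernel_dim M = kernel_dim N"
proof -
  interpret KM: kernel n n M by (unfold_locales, rule M)
  interpret KN: kernel k k N by (unfold_locales, rule N)
  have "linear_map class_ring KM.VK KN.VK r"
  proof (intro linear_map.intro)
    show "vectorspace class_ring KM.VK" by (rule KM.Ker.vectorspace_axioms)
    show "vectorspace class_ring KN.VK" by (rule KN.Ker.vectorspace_axioms)
    show "mod_hom class_ring KM.VK KN.VK r"
      apply (intro mod_hom.intro mod_hom_axioms.intro)
        apply (rule KM.Ker.module_axioms)
       apply (rule KN.Ker.module_axioms)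
      unfolding LinearCombinations.module_hom_def using img mat_kernel_carrier[OF M] mat_kernel_carrier[OF N]
      by (auto simp: module_vec_simps class_ring_simps intro!: lin_add lin_smult)
  qed
  then interpret L: linear_map class_ring KM.VK KN.VK r .
  obtain B where "finite B" "KM.basis B" using kernel_basis_exists[OF M] by auto
  hence fd: "KM.Ker.fin_dim" unfolding KM.Ker.fin_dim_def KM.Ker.basis_def by auto
  have "KM.dim = KN.dim"
    by (rule L.dim_eq[OF fd]) (use inj img in auto)
  thus ?thesis using M N unfolding kernel_dim_def by simp
qed

lemma pick_bij: "finite C \<Longrightarrow> bij_betw (pick C) {0..<card C} C"
proof -
  assume f: "finite C"
  have inj: "inj_on (pick C) {0..<card C}"
    unfolding inj_on_def by (metis atLeastLessThan_iff nat_neq_iff pick_mono)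
  have "pick C ` {0..<card C} = C"
  proof
    show "pick C ` {0..<card C} \<subseteq> C" using pick_in_set by auto
    show "C \<subseteq> pick C ` {0..<card C}"
    proof
      fix i assume i: "i \<in> C"
      have "{a\<in>C. a < i} \<subset> C" using i by auto
      hence "card {a\<in>C. a < i} < card C" using f by (simp add: psubset_card_mono)
      thus "i \<in> pick C ` {0..<card C}" using pick_card_in_set[OF i] by force
    qed
  qed
  thus ?thesis using inj unfolding bij_betw_def by auto
qed

lemma sum_reindex_pick:
  assumes C: "C \<subseteq> {0..<n}" and z: "\<And>b. b \<in> {0..<n} \<Longrightarrow> b \<notin> C \<Longrightarrow> f b = 0"
  shows "(\<Sum>b\<in>{0..<n}. f b) = (\<Sum>j\<in>{0..<card C}. f (pick C j))"
proof -
  have fin: "finite C" using C finite_subset by blast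
  have "(\<Sum>b\<in>{0..<n}. f b) = (\<Sum>b\<in>C. f b)"
    using sum.mono_neutral_right[of "{0..<n}" C f] C z by auto
  also have "\<dots> = (\<Sum>j\<in>{0..<card C}. f (pick C j))"
    using sum.reindex_bij_betw[OF pick_bij[OF fin], of f] by simp
  finally show ?thesis .
qed

lemma pick_idx: "finite C \<Longrightarrow> b \<in> C \<Longrightarrow> card {a\<in>C. a < b} < card C \<and> pick C (card {a\<in>C. a < b}) = b"
proof -
  assume f: "finite C" and i: "b \<in> C"
  have "{a\<in>C. a < b} \<subset> C" using i by auto
  hence "card {a\<in>C. a < b} < card C" using f by (simp add: psubset_card_mono)
  thus ?thesis using pick_card_in_set[OF i] by simp
qed

lemma DL_idx: "B \<in> carrier_mat m m \<Longrightarrow> a < m \<Longrightarrow> b < m \<Longrightarrow> deformed_laplacian B l $$ (a,b) =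
   (if a = b then 1 else 0) - l * B$$(a,b)
   + l^2 * ((if a = b then (B*B)$$(a,a) else 0) - (if a = b then 1 else 0))
   + l^3 * (B$$(a,b) - B$$(a,b) * B$$(b,a))"
  unfolding deformed_laplacian_def deg2_diag_def sym_part_def by auto

lemma DL_carrier: "B \<in> carrier_mat m m \<Longrightarrow> deformed_laplacian B l \<in> carrier_mat m m"
  unfolding deformed_laplacian_def deg2_diag_def sym_part_def by auto


lemma mult_mat_vec_sum: "M \<in> carrier_mat n n \<Longrightarrow> z \<in> carrier_vec n \<Longrightarrow> a < n \<Longrightarrow>
   (M *\<^sub>v z) $ a = (\<Sum>b\<in>{0..<n}. M $$ (a,b) * z $ b)"
  by (auto simp: scalar_prod_def)

locale dg =
  fixes n :: nat and E :: "(nat \<times> nat) set" and l :: complex and Ci :: "nat set"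
  assumes Esub: "E \<subseteq> {0..<n} \<times> {0..<n}"
    and Ci: "Ci \<in> components n E"
    and nonsing: "\<forall>C \<in> components n E. C \<noteq> Ci \<longrightarrow> det (component_laplacian n E C l) \<noteq> 0"
begin

abbreviation "A \<equiv> digraph_adj n E"
abbreviation "M \<equiv> deformed_laplacian A l"
abbreviation "cr \<equiv> comp_rel n E"

lemma A_carrier: "A \<in> carrier_mat n n" unfolding digraph_adj_def by auto
lemma A_idx: "a < n \<Longrightarrow> b < n \<Longrightarrow> A $$ (a,b) = (if (a,b) \<in> E then 1 else 0)"
  unfolding digraph_adj_def by auto
lemma M_carrier: "M \<in> carrier_mat n n"
  using DL_carrier[OF A_carrier] .
lemma M_idx: "a < n \<Longrightarrow> b < n \<Longrightarrow> M $$ (a,b) = (if a = b then 1 else 0) - l * A$$(a,b)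
   + l^2 * ((if a = b then (A*A)$$(a,a) else 0) - (if a = b then 1 else 0))
   + l^3 * (A$$(a,b) - A$$(a,b) * A$$(b,a))"
  using DL_idx[OF A_carrier] by blast
lemma M_off: "a < n \<Longrightarrow> b < n \<Longrightarrow> a \<noteq> b \<Longrightarrow> (a,b) \<notin> E \<Longrightarrow> M $$ (a,b) = 0"
  using M_idx A_idx by simp

lemma trancl_bound: "(a,b) \<in> E\<^sup>+ \<Longrightarrow> a < n \<and> b < n"
  by (induction rule: trancl.induct) (use Esub in auto)

lemma equiv_cr: "equiv {0..<n} cr"
proof -
  have "(a,c) \<in> cr" if "(a,b) \<in> cr" "(b,c) \<in> cr" for a b c
    using that trancl_trans[of a b E c] trancl_trans[of c b E a] unfolding comp_rel_def by auto
  hence "trans cr" unfolding trans_def by blast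
  moreover have "refl_on {0..<n} cr" unfolding refl_on_def comp_rel_def by auto
  moreover have "sym cr" unfolding sym_def comp_rel_def by auto
  moreover have "cr \<subseteq> {0..<n} \<times> {0..<n}" unfolding comp_rel_def by auto
  ultimately show ?thesis unfolding equiv_def refl_on_def by blast
qed

lemma cr_bound: "(a,b) \<in> cr \<Longrightarrow> a < n \<and> b < n" unfolding comp_rel_def by auto

lemma comp_cases: "C \<in> components n E \<Longrightarrow> \<exists>v<n. C = cr``{v}"
  unfolding components_def by (auto elim!: quotientE)

lemma comp_class: "C \<in> components n E \<Longrightarrow> a \<in> C \<Longrightarrow> C = cr``{a}"
proof -
  assume C: "C \<in> components n E" and a: "a \<in> C"
  obtain v where v: "v < n" "C = cr``{v}" using comp_cases[OF C] by auto
  have "(v,a) \<in> cr" using a v by auto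
  thus ?thesis using equiv_class_eq[OF equiv_cr] v by auto
qed

lemma class_comp: "v < n \<Longrightarrow> cr``{v} \<in> components n E"
  unfolding components_def by (auto intro: quotientI)

lemma comp_sub: "C \<in> components n E \<Longrightarrow> C \<subseteq> {0..<n}"
  using comp_cases cr_bound by fastforce

lemma comp_mem: "C \<in> components n E \<Longrightarrow> a \<in> C \<Longrightarrow> (b \<in> C) = ((a,b) \<in> cr)"
  using comp_class by blast

lemma mutual_cr: "a < n \<Longrightarrow> b < n \<Longrightarrow> (a,b) \<in> E\<^sup>* \<Longrightarrow> (b,a) \<in> E\<^sup>* \<Longrightarrow> (a,b) \<in> cr"
  unfolding comp_rel_def by (auto simp: rtrancl_eq_or_trancl)

lemma sub_carrier: "C \<subseteq> {0..<n} \<Longrightarrow> submatrix A C C \<in> carrier_mat (card C) (card C)"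
proof -
  assume "C \<subseteq> {0..<n}"
  hence "{i. i < n \<and> i \<in> C} = C" by auto
  thus ?thesis unfolding submatrix_def using A_carrier by auto
qed

lemma sub_idx: "C \<subseteq> {0..<n} \<Longrightarrow> j < card C \<Longrightarrow> k < card C \<Longrightarrow>
   submatrix A C C $$ (j,k) = A $$ (pick C j, pick C k)"
proof -
  assume "C \<subseteq> {0..<n}" "j < card C" "k < card C"
  moreover hence "{i. i < n \<and> i \<in> C} = C" by auto
  ultimately show ?thesis using submatrix_index[of j A C k C] A_carrier by auto
qed

lemma MC_carrier: "C \<in> components n E \<Longrightarrow> component_laplacian n E C l \<in> carrier_mat (card C) (card C)"
  using DL_carrier[OF sub_carrier[OF comp_sub]] unfolding component_laplacian_def by auto

lemma MC_idx: assumes C: "C \<in> components n E" and j: "j < card C" and k: "k < card C"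
  shows "component_laplacian n E C l $$ (j,k) = M $$ (pick C j, pick C k)"
proof -
  let ?S = "submatrix A C C"
  have Cs: "C \<subseteq> {0..<n}" by (rule comp_sub[OF C])
  have fin: "finite C" using Cs finite_subset by blast
  have S: "?S \<in> carrier_mat (card C) (card C)" by (rule sub_carrier[OF Cs])
  have pj: "pick C j \<in> C" "pick C k \<in> C" using pick_in_set j k by auto
  hence pjn: "pick C j < n" "pick C k < n" using Cs by auto
  have sq: "(?S * ?S) $$ (j,j) = (A * A) $$ (pick C j, pick C j)"
  proof -
    have "(?S * ?S) $$ (j,j) = (\<Sum>i\<in>{0..<card C}. A $$ (pick C j, pick C i) * A $$ (pick C i, pick C j))"
      using S j sub_idx[OF Cs] by (auto simp: scalar_prod_def intro!: sum.cong)
    also have "\<dots> = (\<Sum>b\<in>{0..<n}. A $$ (pick C j, b) * A $$ (b, pick C j))"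
    proof (rule sum_reindex_pick[OF Cs, symmetric])
      fix b assume b: "b \<in> {0..<n}" "b \<notin> C"
      show "A $$ (pick C j, b) * A $$ (b, pick C j) = 0"
      proof (rule ccontr)
        assume "A $$ (pick C j, b) * A $$ (b, pick C j) \<noteq> 0"
        hence "(pick C j, b) \<in> E" "(b, pick C j) \<in> E" using A_idx b pjn by (auto split: if_splits)
        hence "(pick C j, b) \<in> cr" using b pjn by (intro mutual_cr) auto
        thus False using comp_mem[OF C pj(1)] b by auto
      qed
    qed
    also have "\<dots> = (A * A) $$ (pick C j, pick C j)"
      using A_carrier pjn by (auto simp: scalar_prod_def)
    finally show ?thesis .
  qed
  have eq: "(pick C j = pick C k) = (j = k)"
  proof -
    have "j \<noteq> k \<Longrightarrow> pick C j \<noteq> pick C k"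
      using pick_mono[of k C j] pick_mono[of j C k] j k by (metis less_irrefl nat_neq_iff)
    thus ?thesis by auto
  qed
  show ?thesis
    unfolding component_laplacian_def DL_idx[OF S j k] M_idx[OF pjn] eq
    using sub_idx[OF Cs j k] sub_idx[OF Cs k j] sq by (cases "j = k") simp_all
qed


lemma cr_sym: "(a,b) \<in> cr \<Longrightarrow> (b,a) \<in> cr"
  using equiv_cr unfolding equiv_def sym_def by blast
lemma cr_trans: "(a,b) \<in> cr \<Longrightarrow> (b,c) \<in> cr \<Longrightarrow> (a,c) \<in> cr"
  using equiv_cr unfolding equiv_def trans_def by blast
lemma cr_refl: "a < n \<Longrightarrow> (a,a) \<in> cr"
  unfolding comp_rel_def by auto
lemma cr_rtrancl: "(a,b) \<in> cr \<Longrightarrow> (a,b) \<in> E\<^sup>* \<and> (b,a) \<in> E\<^sup>*"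
  unfolding comp_rel_def by auto

lemma row_rel: assumes C: "C \<in> components n E" and x: "x \<in> carrier_vec n"
  and z: "\<forall>a\<in>C. \<forall>b<n. b \<notin> C \<longrightarrow> M$$(a,b) * x$b = 0" and j: "j < card C"
  shows "(M *\<^sub>v x) $ pick C j = (component_laplacian n E C l *\<^sub>v vec (card C) (\<lambda>i. x $ pick C i)) $ j"
proof -
  have Cs: "C \<subseteq> {0..<n}" by (rule comp_sub[OF C])
  have pj: "pick C j \<in> C" using pick_in_set j by auto
  hence pjn: "pick C j < n" using Cs by auto
  have "(M *\<^sub>v x) $ pick C j = (\<Sum>b\<in>{0..<n}. M $$ (pick C j, b) * x $ b)"
    by (rule mult_mat_vec_sum[OF M_carrier x pjn])
  also have "\<dots> = (\<Sum>i\<in>{0..<card C}. M $$ (pick C j, pick C i) * x $ pick C i)"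
    by (rule sum_reindex_pick[OF Cs]) (use z pj in auto)
  also have "\<dots> = (component_laplacian n E C l *\<^sub>v vec (card C) (\<lambda>i. x $ pick C i)) $ j"
    by (subst mult_mat_vec_sum[OF MC_carrier[OF C] _ j]) (auto simp: MC_idx[OF C j])
  finally show ?thesis .
qed

lemma K_aux: "card S = m \<Longrightarrow> S \<subseteq> {0..<n} \<Longrightarrow> S \<inter> Ci = {} \<Longrightarrow> (\<forall>a\<in>S. \<forall>b. (a,b) \<in> cr \<longrightarrow> b \<in> S)
  \<Longrightarrow> z \<in> carrier_vec n \<Longrightarrow> (\<forall>b<n. b \<notin> S \<longrightarrow> z$b = 0) \<Longrightarrow> (\<forall>a\<in>S. (M *\<^sub>v z)$a = 0)
  \<Longrightarrow> \<forall>b\<in>S. z$b = 0"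
proof (induction m arbitrary: S rule: less_induct)
  case (less m S)
  note card = less.prems(1) and Ssub = less.prems(2) and SCi = less.prems(3) and clos = less.prems(4)
    and zc = less.prems(5) and zout = less.prems(6) and rows = less.prems(7)
  show ?case
  proof (cases "S = {}")
    case True thus ?thesis by simp
  next
    case False
    define R where "R v = {w. (v,w) \<in> E\<^sup>*}" for v
    have finR: "finite (R v)" for v
    proof -
      have "R v \<subseteq> insert v {0..<n}"
        unfolding R_def using trancl_bound by (auto simp: rtrancl_eq_or_trancl)
      thus ?thesis using finite_subset by blast
    qed
    obtain v0 where "v0 \<in> S" using False by auto
    then obtain v where v: "v \<in> S" and vmin: "\<forall>w. w \<in> S \<longrightarrow> card (R v) \<le> card (R w)"
      using ex_has_least_nat[of "\<lambda>x. x \<in> S" v0 "\<lambda>x. card (R x)"] by blast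
    have vn: "v < n" using v Ssub by auto
    define C where "C = cr``{v}"
    have C: "C \<in> components n E" unfolding C_def by (rule class_comp[OF vn])
    have vC: "v \<in> C" unfolding C_def using cr_refl[OF vn] by auto
    have CS: "C \<subseteq> S" unfolding C_def using clos v by auto
    have CCi: "C \<noteq> Ci" using vC v SCi by auto
    have det: "det (component_laplacian n E C l) \<noteq> 0" using nonsing C CCi by auto
    have Cs: "C \<subseteq> {0..<n}" by (rule comp_sub[OF C])
    have finC: "finite C" using Cs finite_subset by blast
    have Rsub: "(a,b) \<in> E\<^sup>* \<Longrightarrow> R b \<subseteq> R a" for a b
      unfolding R_def by auto
    have sink: "b \<in> C" if a: "a \<in> C" and b: "b \<in> S" and ab: "(a,b) \<in> E" for a b
    proof (rule ccontr)
      assume bC: "b \<notin> C"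
      have va: "(v,a) \<in> cr" using a unfolding C_def by auto
      hence va': "(v,a) \<in> E\<^sup>*" "(a,v) \<in> E\<^sup>*" using cr_rtrancl by auto
      have "(v,b) \<in> E\<^sup>*" using va'(1) ab by (rule rtrancl_into_rtrancl)
      hence Rab: "R b \<subseteq> R v" using Rsub[of v b] by blast
      have "v \<notin> R b"
      proof
        assume "v \<in> R b"
        hence bv: "(b,v) \<in> E\<^sup>*" unfolding R_def by auto
        have vb: "(v,b) \<in> E\<^sup>*" using va'(1) ab by auto
        have "b < n" using ab Esub by auto
        hence "(v,b) \<in> cr" using mutual_cr[OF vn _ vb bv] by auto
        thus False using bC unfolding C_def by auto
      qed
      moreover have "v \<in> R v" unfolding R_def by auto
      ultimately have "R b \<subset> R v" using Rab by auto
      hence "card (R b) < card (R v)" using finR psubset_card_mono by blast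
      thus False using vmin b by fastforce
    qed
    let ?k = "card C"
    let ?MC = "component_laplacian n E C l"
    define w where "w = vec ?k (\<lambda>i. z $ pick C i)"
    have w: "w \<in> carrier_vec ?k" unfolding w_def by auto
    have "?MC *\<^sub>v w = 0\<^sub>v ?k"
    proof (rule eq_vecI)
      show "dim_vec (?MC *\<^sub>v w) = dim_vec (0\<^sub>v ?k)" using MC_carrier[OF C] by auto
      fix j assume "j < dim_vec (0\<^sub>v ?k)"
      hence j: "j < ?k" by auto
      have pj: "pick C j \<in> C" using pick_in_set j by auto
      have "(?MC *\<^sub>v w) $ j = (M *\<^sub>v z) $ pick C j"
        unfolding w_def
      proof (rule row_rel[OF C zc _ j, symmetric], intro ballI allI impI)
        fix a b assume a: "a \<in> C" and b: "b < n" "b \<notin> C"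
        show "M $$ (a, b) * z $ b = 0"
        proof (cases "b \<in> S")
          case True
          hence "(a,b) \<notin> E" using sink a b by auto
          moreover have "a \<noteq> b" "a < n" using a b Cs by auto
          ultimately show ?thesis using M_off b by auto
        next
          case False thus ?thesis using zout b by auto
        qed
      qed
      also have "\<dots> = 0" using rows pj CS by auto
      finally show "(?MC *\<^sub>v w) $ j = 0\<^sub>v ?k $ j" using j by auto
    qed
    hence w0: "w = 0\<^sub>v ?k" using det det_0_iff_vec_prod_zero[OF MC_carrier[OF C]] w by blast
    have zC: "z $ b = 0" if b: "b \<in> C" for b
    proof -
      from pick_idx[OF finC b] have i: "card {a\<in>C. a < b} < ?k" "pick C (card {a\<in>C. a < b}) = b" by auto
      have "w $ card {a\<in>C. a < b} = z $ b" unfolding w_def using i by auto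
      thus ?thesis using w0 i by auto
    qed
    define S' where "S' = S - C"
    have "card S' < m"
    proof -
      have "finite S" using Ssub finite_subset by blast
      moreover have "S' \<subset> S" unfolding S'_def using vC v by auto
      ultimately show ?thesis using card psubset_card_mono by blast
    qed
    moreover have "S' \<subseteq> {0..<n}" "S' \<inter> Ci = {}" unfolding S'_def using Ssub SCi by auto
    moreover have "\<forall>a\<in>S'. \<forall>b. (a,b) \<in> cr \<longrightarrow> b \<in> S'"
    proof (intro ballI allI impI)
      fix a b assume a: "a \<in> S'" and ab: "(a,b) \<in> cr"
      have "b \<in> S" using clos a ab unfolding S'_def by auto
      moreover have "b \<notin> C"
      proof
        assume "b \<in> C"
        hence "(v,b) \<in> cr" unfolding C_def by auto
        hence "(v,a) \<in> cr" using cr_trans cr_sym ab by blast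
        thus False using a unfolding S'_def C_def by auto
      qed
      ultimately show "b \<in> S'" unfolding S'_def by auto
    qed
    moreover have "\<forall>b<n. b \<notin> S' \<longrightarrow> z$b = 0" using zout zC unfolding S'_def by auto
    moreover have "\<forall>a\<in>S'. (M *\<^sub>v z)$a = 0" using rows unfolding S'_def by auto
    ultimately have "\<forall>b\<in>S'. z$b = 0" using less.IH zc by blast
    thus ?thesis using zC unfolding S'_def by blast
  qed
qed

lemma K: "S \<subseteq> {0..<n} \<Longrightarrow> S \<inter> Ci = {} \<Longrightarrow> (\<forall>a\<in>S. \<forall>b. (a,b) \<in> cr \<longrightarrow> b \<in> S)
  \<Longrightarrow> z \<in> carrier_vec n \<Longrightarrow> (\<forall>b<n. b \<notin> S \<longrightarrow> z$b = 0) \<Longrightarrow> (\<forall>a\<in>S. (M *\<^sub>v z)$a = 0)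
  \<Longrightarrow> b \<in> S \<Longrightarrow> z$b = 0"
  using K_aux by blast


abbreviation "Tset \<equiv> {a. a < n \<and> \<not> (\<exists>c\<in>Ci. (a,c) \<in> E\<^sup>*)}"

lemma Ci_sub: "Ci \<subseteq> {0..<n}" by (rule comp_sub[OF Ci])
lemma Ci_fin: "finite Ci" using Ci_sub finite_subset by blast

lemma Z: assumes x: "x \<in> carrier_vec n" and rows: "\<forall>a<n. a \<notin> Ci \<longrightarrow> (M *\<^sub>v x)$a = 0"
  and b: "b \<in> Tset" shows "x$b = 0"
proof -
  define z where "z = vec n (\<lambda>b. if b \<in> Tset then x$b else 0)"
  have zc: "z \<in> carrier_vec n" unfolding z_def by auto
  have "z $ b = 0"
  proof (rule K[OF _ _ _ zc])
    show "Tset \<subseteq> {0..<n}" by auto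
    show "Tset \<inter> Ci = {}" by auto
    show "\<forall>a\<in>Tset. \<forall>b. (a, b) \<in> cr \<longrightarrow> b \<in> Tset"
    proof (intro ballI allI impI)
      fix a b assume a: "a \<in> Tset" and ab: "(a,b) \<in> cr"
      have "b < n" using cr_bound ab by auto
      moreover have "(a,b) \<in> E\<^sup>*" using cr_rtrancl ab by auto
      ultimately show "b \<in> Tset" using a by (auto intro: rtrancl_trans)
    qed
    show "\<forall>b<n. b \<notin> Tset \<longrightarrow> z $ b = 0" unfolding z_def by auto
    show "b \<in> Tset" by fact
    show "\<forall>a\<in>Tset. (M *\<^sub>v z) $ a = 0"
    proof
      fix a assume a: "a \<in> Tset"
      have "(M *\<^sub>v z) $ a = (\<Sum>c\<in>{0..<n}. M $$ (a,c) * z $ c)"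
        using mult_mat_vec_sum[OF M_carrier zc] a by auto
      also have "\<dots> = (\<Sum>c\<in>{0..<n}. M $$ (a,c) * x $ c)"
      proof (rule sum.cong[OF refl])
        fix c assume c: "c \<in> {0..<n}"
        show "M $$ (a,c) * z $ c = M $$ (a,c) * x $ c"
        proof (cases "c \<in> Tset")
          case True thus ?thesis unfolding z_def using c by auto
        next
          case False
          then obtain d where d: "d \<in> Ci" "(c,d) \<in> E\<^sup>*" using c by auto
          have "(a,c) \<notin> E"
          proof
            assume "(a,c) \<in> E"
            hence "(a,d) \<in> E\<^sup>*" using d by (auto intro: converse_rtrancl_into_rtrancl)
            thus False using a d by auto
          qed
          moreover have "a \<noteq> c" using a False by auto
          ultimately have "M $$ (a,c) = 0" using M_off a c by auto
          thus ?thesis by simp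
        qed
      qed
      also have "\<dots> = (M *\<^sub>v x) $ a" using mult_mat_vec_sum[OF M_carrier x] a by auto
      also have "\<dots> = 0" using rows a by auto
      finally show "(M *\<^sub>v z) $ a = 0" .
    qed
  qed
  thus ?thesis unfolding z_def using b by auto
qed

definition rst :: "complex vec \<Rightarrow> complex vec" where
  "rst x = vec (card Ci) (\<lambda>j. x $ pick Ci j)"

lemma rows_Ci: assumes x: "x \<in> carrier_vec n" and xT: "\<forall>b\<in>Tset. x$b = 0" and j: "j < card Ci"
  shows "(M *\<^sub>v x) $ pick Ci j = (component_laplacian n E Ci l *\<^sub>v rst x) $ j"
  unfolding rst_def
proof (rule row_rel[OF Ci x _ j], intro ballI allI impI)
  fix a b assume a: "a \<in> Ci" and b: "b < n" "b \<notin> Ci"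
  show "M $$ (a, b) * x $ b = 0"
  proof (cases "b \<in> Tset")
    case True thus ?thesis using xT by auto
  next
    case False
    then obtain c where c: "c \<in> Ci" "(b,c) \<in> E\<^sup>*" using b by auto
    have "(a,b) \<notin> E"
    proof
      assume ab: "(a,b) \<in> E"
      have "(c,a) \<in> cr" using comp_mem[OF Ci c(1)] a by auto
      hence "(c,a) \<in> E\<^sup>*" using cr_rtrancl by auto
      hence "(b,a) \<in> E\<^sup>*" using c(2) by (meson rtrancl_trans)
      moreover have "(a,b) \<in> E\<^sup>*" using ab by auto
      moreover have "a < n" using a Ci_sub by auto
      ultimately have "(a,b) \<in> cr" using mutual_cr b by auto
      thus False using comp_mem[OF Ci a] b by auto
    qed
    moreover have "a \<noteq> b" "a < n" using a b Ci_sub by auto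
    ultimately show ?thesis using M_off b by auto
  qed
qed

lemma compl_closed: "\<forall>a\<in>{0..<n} - Ci. \<forall>b. (a,b) \<in> cr \<longrightarrow> b \<in> {0..<n} - Ci"
proof (intro ballI allI impI)
  fix a b assume a: "a \<in> {0..<n} - Ci" and ab: "(a,b) \<in> cr"
  have "b < n" using cr_bound ab by auto
  moreover have "b \<notin> Ci"
  proof
    assume "b \<in> Ci"
    hence "a \<in> Ci" using comp_mem[OF Ci, of b a] cr_sym[OF ab] by auto
    thus False using a by auto
  qed
  ultimately show "b \<in> {0..<n} - Ci" by auto
qed

lemma ker_M: "mat_kernel M = {v. v \<in> carrier_vec n \<and> M *\<^sub>v v = 0\<^sub>v n}"
  by (rule mat_kernel[OF M_carrier])
lemma ker_MC: "mat_kernel (component_laplacian n E Ci l) =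
   {v. v \<in> carrier_vec (card Ci) \<and> component_laplacian n E Ci l *\<^sub>v v = 0\<^sub>v (card Ci)}"
  by (rule mat_kernel[OF MC_carrier[OF Ci]])

lemma rst_ker: assumes x: "x \<in> mat_kernel M" shows "rst x \<in> mat_kernel (component_laplacian n E Ci l)"
proof -
  have xc: "x \<in> carrier_vec n" and Mx: "M *\<^sub>v x = 0\<^sub>v n" using x ker_M by auto
  have rows: "\<forall>a<n. a \<notin> Ci \<longrightarrow> (M *\<^sub>v x)$a = 0" using Mx by auto
  have xT: "\<forall>b\<in>Tset. x$b = 0" using Z[OF xc rows] by auto
  have "component_laplacian n E Ci l *\<^sub>v rst x = 0\<^sub>v (card Ci)"
  proof (rule eq_vecI)
    show "dim_vec (component_laplacian n E Ci l *\<^sub>v rst x) = dim_vec (0\<^sub>v (card Ci))"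
      using MC_carrier[OF Ci] by auto
    fix j assume "j < dim_vec (0\<^sub>v (card Ci))"
    hence j: "j < card Ci" by auto
    have "pick Ci j < n" using pick_in_set[of j Ci] j Ci_sub by auto
    thus "(component_laplacian n E Ci l *\<^sub>v rst x) $ j = 0\<^sub>v (card Ci) $ j"
      using rows_Ci[OF xc xT j] Mx j by auto
  qed
  thus ?thesis using ker_MC unfolding rst_def by auto
qed


lemma rst_inj: "inj_on rst (mat_kernel M)"
proof (rule inj_onI)
  fix x y assume x: "x \<in> mat_kernel M" and y: "y \<in> mat_kernel M" and r: "rst x = rst y"
  have xc: "x \<in> carrier_vec n" and Mx: "M *\<^sub>v x = 0\<^sub>v n" using x ker_M by auto
  have yc: "y \<in> carrier_vec n" and My: "M *\<^sub>v y = 0\<^sub>v n" using y ker_M by auto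
  define d where "d = x - y"
  have dc: "d \<in> carrier_vec n" unfolding d_def using xc yc by auto
  have Md: "M *\<^sub>v d = 0\<^sub>v n" unfolding d_def
    using mult_minus_distrib_mat_vec[OF M_carrier xc yc] Mx My by auto
  have dCi: "d $ b = 0" if b: "b \<in> Ci" for b
  proof -
    from pick_idx[OF Ci_fin b] have i: "card {a\<in>Ci. a < b} < card Ci" "pick Ci (card {a\<in>Ci. a < b}) = b" by auto
    have "rst x $ card {a\<in>Ci. a < b} = rst y $ card {a\<in>Ci. a < b}" using r by simp
    hence "x $ b = y $ b" using i unfolding rst_def by auto
    moreover have "b < n" using b Ci_sub by auto
    ultimately show ?thesis unfolding d_def using xc yc by auto
  qed
  have "d $ b = 0" if b: "b < n" for b
  proof (cases "b \<in> Ci")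
    case True thus ?thesis using dCi by auto
  next
    case False
    show ?thesis
      by (rule K[OF _ _ compl_closed dc]) (use dCi Md False b in auto)
  qed
  thus "x = y" using xc yc unfolding d_def
    by (intro eq_vecI) (auto dest!: spec simp: carrier_vecD)
qed

lemma rst_surj: assumes y: "y \<in> mat_kernel (component_laplacian n E Ci l)"
  shows "y \<in> rst ` mat_kernel M"
proof -
  let ?MC = "component_laplacian n E Ci l"
  have yc: "y \<in> carrier_vec (card Ci)" and My: "?MC *\<^sub>v y = 0\<^sub>v (card Ci)" using y ker_MC by auto
  define N where "N = mat n n (\<lambda>(a,b). if a \<in> Ci then (if a = b then 1 else 0) else M $$ (a,b))"
  have Nc: "N \<in> carrier_mat n n" unfolding N_def by auto
  have Nrow: "(N *\<^sub>v v) $ a = (if a \<in> Ci then v $ a else (M *\<^sub>v v) $ a)" if v: "v \<in> carrier_vec n" and a: "a < n" for v a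
  proof (cases "a \<in> Ci")
    case True
    have "(N *\<^sub>v v) $ a = (\<Sum>b\<in>{0..<n}. (if a = b then 1 else 0) * v $ b)"
      using mult_mat_vec_sum[OF Nc v a] True a unfolding N_def by (auto intro!: sum.cong)
    also have "\<dots> = (\<Sum>b\<in>{0..<n}. if a = b then v $ b else 0)" by (rule sum.cong) auto
    also have "\<dots> = v $ a" using a by simp
    finally show ?thesis using True by simp
  next
    case False
    have "(N *\<^sub>v v) $ a = (\<Sum>b\<in>{0..<n}. M $$ (a,b) * v $ b)"
      using mult_mat_vec_sum[OF Nc v a] False a unfolding N_def by (auto intro!: sum.cong)
    also have "\<dots> = (M *\<^sub>v v) $ a" using mult_mat_vec_sum[OF M_carrier v a] by simp
    finally show ?thesis using False by simp
  qed
  have "det N \<noteq> 0"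
  proof
    assume "det N = 0"
    then obtain v where v: "v \<in> carrier_vec n" "v \<noteq> 0\<^sub>v n" "N *\<^sub>v v = 0\<^sub>v n"
      using det_0_iff_vec_prod_zero[OF Nc] by auto
    have vCi: "v $ b = 0" if "b \<in> Ci" for b
      using Nrow[OF v(1), of b] v(3) that Ci_sub by auto
    have "v $ b = 0" if b: "b < n" for b
    proof (cases "b \<in> Ci")
      case True thus ?thesis using vCi by auto
    next
      case False
      have rows: "\<forall>a\<in>{0..<n} - Ci. (M *\<^sub>v v) $ a = 0"
        using Nrow[OF v(1)] v(3) by fastforce
      show ?thesis
        by (rule K[OF _ _ compl_closed v(1)]) (use vCi rows False b in auto)
    qed
    hence "v = 0\<^sub>v n" using v(1) by (intro eq_vecI) auto
    thus False using v(2) by simp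
  qed
  from det_non_zero_imp_unit[OF Nc this, unfolded Units_def, of "()"]
  obtain B where B: "B \<in> carrier_mat n n" and BN: "B * N = 1\<^sub>m n" and NB: "N * B = 1\<^sub>m n"
    by (auto simp: ring_mat_def)
  define bv where "bv = vec n (\<lambda>a. if a \<in> Ci then y $ card {c\<in>Ci. c < a} else 0)"
  have bvc: "bv \<in> carrier_vec n" unfolding bv_def by auto
  define x where "x = B *\<^sub>v bv"
  have xc: "x \<in> carrier_vec n" unfolding x_def using B bvc by auto
  have Nx: "N *\<^sub>v x = bv" unfolding x_def
    using assoc_mult_mat_vec[OF Nc B bvc, symmetric] NB bvc by auto
  have rows: "\<forall>a<n. a \<notin> Ci \<longrightarrow> (M *\<^sub>v x)$a = 0"
  proof (intro allI impI)
    fix a assume a: "a < n" "a \<notin> Ci"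
    have "(N *\<^sub>v x) $ a = bv $ a" using Nx by simp
    thus "(M *\<^sub>v x)$a = 0" using Nrow[OF xc a(1)] a unfolding bv_def by simp
  qed
  have xCi: "x $ a = y $ card {c\<in>Ci. c < a}" if "a \<in> Ci" for a
    using Nrow[OF xc, of a] Nx that Ci_sub unfolding bv_def by auto
  have rx: "rst x = y"
  proof (rule eq_vecI)
    show "dim_vec (rst x) = dim_vec y" using yc unfolding rst_def by auto
    fix j assume "j < dim_vec y"
    hence j: "j < card Ci" using yc by auto
    have "pick Ci j \<in> Ci" using pick_in_set j by auto
    hence "x $ pick Ci j = y $ j" using xCi card_pick[of j Ci] j by auto
    thus "rst x $ j = y $ j" unfolding rst_def using j by auto
  qed
  have xT: "\<forall>b\<in>Tset. x$b = 0" using Z[OF xc rows] by auto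
  have "M *\<^sub>v x = 0\<^sub>v n"
  proof (rule eq_vecI)
    show "dim_vec (M *\<^sub>v x) = dim_vec (0\<^sub>v n)" using M_carrier by auto
    fix a assume "a < dim_vec (0\<^sub>v n)"
    hence a: "a < n" by auto
    show "(M *\<^sub>v x) $ a = 0\<^sub>v n $ a"
    proof (cases "a \<in> Ci")
      case True
      from pick_idx[OF Ci_fin True] have i: "card {c\<in>Ci. c < a} < card Ci" "pick Ci (card {c\<in>Ci. c < a}) = a" by auto
      have "(M *\<^sub>v x) $ a = (?MC *\<^sub>v rst x) $ card {c\<in>Ci. c < a}"
        using rows_Ci[OF xc xT i(1)] i(2) by simp
      also have "\<dots> = 0" using My rx i(1) by auto
      finally show ?thesis using a by simp
    next
      case False thus ?thesis using rows a by auto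
    qed
  qed
  hence "x \<in> mat_kernel M" using ker_M xc by auto
  thus ?thesis using rx by blast
qed

lemma main: "kernel_dim M = kernel_dim (component_laplacian n E Ci l)"
proof (rule kernel_dim_iso[OF M_carrier MC_carrier[OF Ci], of rst])
  show "rst (x + y) = rst x + rst y" if "x \<in> carrier_vec n" "y \<in> carrier_vec n" for x y
    using that pick_in_set Ci_sub unfolding rst_def by (intro eq_vecI) fastforce+
  show "rst (c \<cdot>\<^sub>v x) = c \<cdot>\<^sub>v rst x" if "x \<in> carrier_vec n" for c x
    using that pick_in_set Ci_sub unfolding rst_def by (intro eq_vecI) fastforce+
  show "inj_on rst (mat_kernel M)" by (rule rst_inj)
  show "rst ` mat_kernel M = mat_kernel (component_laplacian n E Ci l)"
    using rst_ker rst_surj by blast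
qed

end

theorem proposition3p7:
  fixes n :: nat and E :: "(nat \<times> nat) set" and Ci :: "nat set" and l :: complex
  assumes "E \<subseteq> {0..<n} \<times> {0..<n}"
    and "\<forall>i. (i,i) \<notin> E"
    and "Ci \<in> components n E"
    and "l \<noteq> 1" and "l \<noteq> -1"
    and "finite_eigenvalue (component_laplacian n E Ci) l"
    and "\<forall>C \<in> components n E. C \<noteq> Ci \<longrightarrow> \<not> finite_eigenvalue (component_laplacian n E C) l"
  shows "geom_mult (deformed_laplacian (digraph_adj n E)) l = geom_mult (component_laplacian n E Ci) l"
proof -
  interpret dg n E l Ci
    using assms(1,3,7) unfolding finite_eigenvalue_def by unfold_locales auto
  show ?thesis unfolding geom_mult_def using main .
qed

end
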